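(* Consider any fair, well-formed execution of COP as described in the context (with $S$ correct or Byzantine), and for each client $C_i$ let $\pi_i$ be the sequence defined in the context. For any clients $C_i,C_j$ and any operation $o\in\pi_i\cap\pi_j$, we have $\pi_i|^o=\pi_j|^o$, where $\pi|^o$ denotes the prefix of $\pi$ ending with $o$.
   Context: System model. Clients $C_1,\dots,C_n$ and server $S$ in an asynchronous system, each client connected to $S$ by a reliable FIFO channel; clients are correct; $S$ is correct or Byzantine (may send arbitrary messages). Executions are fair and well-formed. Functionality. $F$ is deterministic over states $\mathcal{S}$, operations $\mathcal{O}$, responses $\mathcal{R}$: $F(s,o)=(s',r)$, extended to sequences by applying operations in order. $\mathrm{commute}_F(s,\rho_1,\rho_2)$ is true iff every interleaving of sequences $\rho_1,\rho_2$ (preserving each one's internal order) executed from $s$ yields the same final state and the same respective responses. Cryptography (ideal). $\mathrm{hash}$ is ideal collision-free; $\mathrm{sign}_i$ is invocable only by $C_i$ and $\mathrm{verify}_i(\phi,m)$ is true iff $C_i$ previously executed $\mathrm{sign}_i(m)$ obtaining $\phi$. $\|$ is concatenation. COP client $C_i$. State: $u$ (initially $\bot$); $c$ (initially $0$); map $H$ with $H[0]=\mathrm{null}$; map $Z$ to $\{\mathrm{success},\mathrm{abort}\}$; state $s$ (initially $s_0$). (1) On invocation of $o$: $u\leftarrow o$, send $\langle\mathrm{invoke},o,c,\mathrm{sign}_i(\mathrm{invoke}\|o\|i)\rangle$ to $S$. (2) On $\langle\mathrm{reply},\omega\rangle$: $\gamma,\mu\leftarrow\langle\rangle$. For $k=1,\dots,\mathrm{length}(\omega)$: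 $(o,j,\tau)=\omega[k]$, $l=c+k$; halt if $\mathrm{verify}_j(\tau,\mathrm{invoke}\|o\|j)$ fails; if $H[l]$ undefined set $H[l]\leftarrow\mathrm{hash}(H[l-1]\|o\|l\|j)$, else halt if $H[l]\neq\mathrm{hash}(H[l-1]\|o\|l\|j)$; if $j=i$ and $Z[l]=\mathrm{success}$ append $o$ to $\mu$, else if $j\neq i$ append $o$ to $\gamma$. Halt if $\omega$ is empty or its last entry has operation $\neq u$ or index $\neq i$. $(a,r)\leftarrow F(s,\mu)$. If $\mathrm{commute}_F(a,\langle u\rangle,\gamma)$: $(a,r)\leftarrow F(a,u)$, $Z[l]\leftarrow\mathrm{success}$; else $r\leftarrow\bot$, $Z[l]\leftarrow\mathrm{abort}$. Send $\langle\mathrm{commit},u,l,H[l],Z[l],\mathrm{sign}_i(\mathrm{commit}\|u\|l\|H[l]\|Z[l])\rangle$ to $S$, set $u\leftarrow\bot$, output $r$. (3) On $\langle\mathrm{broadcast},o,q,h,z,\phi,j\rangle$: halt unless $q=c+1$ and $\mathrm{verify}_j(\phi,\mathrm{commit}\|o\|q\|h\|z)$; if $H[q]$ undefined set $H[q]\leftarrow\mathrm{hash}(H[q-1]\|o\|q\|j)$; halt if $h\neq H[q]$; if $z=\mathrm{success}$, $(s,\cdot)\leftarrow F(s,o)$; $c\leftarrow c+1$. COP server $S$ (when correct). State $t=0$, $b=0$, maps $I,O$ empty. On $\langle\mathrm{invoke},o,c,\tau\rangle$ from $C_i$: $t\leftarrow t+1$, $I[t]\leftarrow(o,i,\tau)$,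 send $\langle\mathrm{reply},\langle I[c+1],\dots,I[t]\rangle\rangle$ to $C_i$. On $\langle\mathrm{commit},o,q,h,z,\phi\rangle$ from $C_i$: $O[q]\leftarrow(o,h,z,\phi,i)$; while $O[b+1]$ defined: $b\leftarrow b+1$, send $\langle\mathrm{broadcast},o',b,h',z',\phi',j\rangle$ to all clients where $(o',h',z',\phi',j)=O[b]$. Terminology. $C_i$ commits $o$ when it issues the commit signature in step (2); the value $l$ there is the sequence number of $o$. A client confirms $o$ when it processes a broadcast message for $o$ in step (3) passing all checks. Definition of $\pi_i$: let $o$ be the operation committed by $C_i$ with the highest sequence number among those operations of $C_i$ that have been confirmed by some client $C_k$ (possibly $C_k=C_i$); let $\alpha_i$ be the sequence of operations confirmed by $C_k$ up to and including $o$; let $\beta_i$ be the sequence of operations committed by $C_i$ with sequence number higher than that of $o$, in order of sequence number; $\pi_i=\alpha_i\circ\beta_i$ (concatenation). *)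

theory Defs
  imports Main
begin

fun runF :: "('s \<Rightarrow> 'ob \<Rightarrow> 's \<times> 'r) \<Rightarrow> 's \<Rightarrow> 'ob list \<Rightarrow> 's \<times> 'r list" where
  "runF F s [] = (s, [])"
| "runF F s (ob # os) =
     (let (s1, r) = F s ob; (s2, rs) = runF F s1 os in (s2, r # rs))"

text \<open>An interleaving of rho1 and rho2: a list of tagged operations
  (True = from rho1, False = from rho2) preserving each internal order.\<close>
definition is_interleaving :: "(bool \<times> 'ob) list \<Rightarrow> 'ob list \<Rightarrow> 'ob list \<Rightarrow> bool" where
  "is_interleaving w rho1 rho2 \<longleftrightarrow>
     map snd (filter fst w) = rho1 \<and> map snd (filter (\<lambda>x. \<not> fst x) w) = rho2"

definition resps_of :: "bool \<Rightarrow> (bool \<times> 'ob) list \<Rightarrow> 'r list \<Rightarrow> 'r list" where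
  "resps_of b w rs = map snd (filter (\<lambda>x. fst x = b) (zip (map fst w) rs))"

definition commuteF :: "('s \<Rightarrow> 'ob \<Rightarrow> 's \<times> 'r) \<Rightarrow> 's \<Rightarrow> 'ob list \<Rightarrow> 'ob list \<Rightarrow> bool" where
  "commuteF F s rho1 rho2 \<longleftrightarrow>
     (\<forall>w w'. is_interleaving w rho1 rho2 \<and> is_interleaving w' rho1 rho2 \<longrightarrow>
        fst (runF F s (map snd w)) = fst (runF F s (map snd w'))
      \<and> resps_of True w (snd (runF F s (map snd w))) = resps_of True w' (snd (runF F s (map snd w')))
      \<and> resps_of False w (snd (runF F s (map snd w))) = resps_of False w' (snd (runF F s (map snd w'))))"

datatype zres = Success | Abort

text \<open>Ideal collision-free hash: hash values are free terms (injective).\<close>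
datatype 'ob hsh = HNull | Hash "'ob hsh" 'ob nat nat

text \<open>Signed payloads: InvokeP ob i = invoke||ob||i ; CommitP ob l h z = commit||ob||l||h||z.\<close>
datatype 'ob payload = InvokeP 'ob nat | CommitP 'ob nat "'ob hsh" zres

datatype 'ob sig = Sig nat "'ob payload"

datatype 'ob msg =
    Reply "('ob \<times> nat \<times> 'ob sig) list"
  | Broadcast 'ob nat "'ob hsh" zres "'ob sig" nat

datatype 'ob event = Invoke nat 'ob | Deliver nat "'ob msg"

text \<open>verify_j(phi, m) holds iff C_j previously executed sign_j(m) obtaining phi.
  The set S records all pairs (j, m) signed so far.\<close>
definition verify :: "(nat \<times> 'ob payload) set \<Rightarrow> nat \<Rightarrow> 'ob sig \<Rightarrow> 'ob payload \<Rightarrow> bool" where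
  "verify S j phi m \<longleftrightarrow> phi = Sig j m \<and> (j, m) \<in> S"

record ('ob, 's) cstate =
  cu :: "'ob option"
  cc :: nat
  cH :: "nat \<Rightarrow> 'ob hsh option"
  cZ :: "nat \<Rightarrow> zres option"
  cs :: 's
  chalted :: bool

text \<open>Global state; commits and confs are history (ghost) variables:
  commits i = operations committed by C_i with their sequence numbers, in commit order;
  confs k = operations confirmed by C_k as (ob, q, j), in confirmation order.\<close>
record ('ob, 's) gstate =
  cl :: "nat \<Rightarrow> ('ob, 's) cstate"
  sigs :: "(nat \<times> 'ob payload) set"
  invoked :: "'ob set"
  commits :: "nat \<Rightarrow> ('ob \<times> nat) list"
  confs :: "nat \<Rightarrow> ('ob \<times> nat \<times> nat) list"

definition init_client :: "'s \<Rightarrow> ('ob, 's) cstate" where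
  "init_client s0 = \<lparr> cu = None, cc = 0, cH = (\<lambda>_. None)(0 := Some HNull),
                      cZ = (\<lambda>_. None), cs = s0, chalted = False \<rparr>"

definition init_state :: "'s \<Rightarrow> ('ob, 's) gstate" where
  "init_state s0 = \<lparr> cl = (\<lambda>_. init_client s0), sigs = {}, invoked = {},
                     commits = (\<lambda>_. []), confs = (\<lambda>_. []) \<rparr>"

definition halt :: "('ob, 's) gstate \<Rightarrow> nat \<Rightarrow> ('ob, 's) gstate" where
  "halt gs i = gs\<lparr> cl := (cl gs)(i := (cl gs i)\<lparr> chalted := True \<rparr>) \<rparr>"

text \<open>The loop of step (2); l is the current index c + k. Returns None on halt.\<close>
fun reply_loop :: "(nat \<times> 'ob payload) set \<Rightarrow> nat \<Rightarrow> (nat \<Rightarrow> zres option) \<Rightarrow> nat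
    \<Rightarrow> ('ob \<times> nat \<times> 'ob sig) list \<Rightarrow> (nat \<Rightarrow> 'ob hsh option) \<Rightarrow> 'ob list \<Rightarrow> 'ob list
    \<Rightarrow> ((nat \<Rightarrow> 'ob hsh option) \<times> 'ob list \<times> 'ob list) option" where
  "reply_loop S i Z l [] H gam mu = Some (H, gam, mu)"
| "reply_loop S i Z l ((ob, j, tau) # w) H gam mu =
     (if \<not> verify S j tau (InvokeP ob j) then None
      else (let hv = Hash (the (H (l - 1))) ob l j in
        if H l \<noteq> None \<and> H l \<noteq> Some hv then None
        else reply_loop S i Z (Suc l) w
               (if H l = None then H(l := Some hv) else H)
               (if j \<noteq> i then gam @ [ob] else gam)
               (if j = i \<and> Z l = Some Success then mu @ [ob] else mu)))"

definition handle_reply :: "('s \<Rightarrow> 'ob \<Rightarrow> 's \<times> 'r) \<Rightarrow> ('ob, 's) gstate \<Rightarrow> nat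
    \<Rightarrow> ('ob \<times> nat \<times> 'ob sig) list \<Rightarrow> ('ob, 's) gstate" where
  "handle_reply F gs i w =
    (let st = cl gs i in
     case reply_loop (sigs gs) i (cZ st) (Suc (cc st)) w (cH st) [] [] of
       None \<Rightarrow> halt gs i
     | Some (H, gam, mu) \<Rightarrow>
        (if w = [] \<or> Some (fst (last w)) \<noteq> cu st \<or> fst (snd (last w)) \<noteq> i then halt gs i
         else (let u = the (cu st); l = cc st + length w; a = fst (runF F (cs st) mu);
                   z = (if commuteF F a [u] gam then Success else Abort)
               in gs\<lparr> cl := (cl gs)(i := st\<lparr> cH := H, cZ := (cZ st)(l := Some z), cu := None \<rparr>),
                      sigs := insert (i, CommitP u l (the (H l)) z) (sigs gs),
                      commits := (commits gs)(i := commits gs i @ [(u, l)]) \<rparr>)))"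

definition handle_broadcast :: "('s \<Rightarrow> 'ob \<Rightarrow> 's \<times> 'r) \<Rightarrow> ('ob, 's) gstate \<Rightarrow> nat
    \<Rightarrow> 'ob \<Rightarrow> nat \<Rightarrow> 'ob hsh \<Rightarrow> zres \<Rightarrow> 'ob sig \<Rightarrow> nat \<Rightarrow> ('ob, 's) gstate" where
  "handle_broadcast F gs i ob q h z phi j =
    (let st = cl gs i in
     if q \<noteq> Suc (cc st) \<or> \<not> verify (sigs gs) j phi (CommitP ob q h z) then halt gs i
     else (let H = (if cH st q = None then (cH st)(q := Some (Hash (the (cH st (q - 1))) ob q j))
                    else cH st) in
       if H q \<noteq> Some h then halt gs i
       else gs\<lparr> cl := (cl gs)(i := st\<lparr> cH := H,
                                   cs := (if z = Success then fst (F (cs st) ob) else cs st),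
                                   cc := Suc (cc st) \<rparr>),
                confs := (confs gs)(i := confs gs i @ [(ob, q, j)]) \<rparr>))"

definition deliver :: "('s \<Rightarrow> 'ob \<Rightarrow> 's \<times> 'r) \<Rightarrow> ('ob, 's) gstate \<Rightarrow> nat \<Rightarrow> 'ob msg \<Rightarrow> ('ob, 's) gstate" where
  "deliver F gs i m = (case m of
      Reply w \<Rightarrow> handle_reply F gs i w
    | Broadcast ob q h z phi j \<Rightarrow> handle_broadcast F gs i ob q h z phi j)"

text \<open>The server is arbitrary
  (Byzantine): any message may be delivered to any non-halted client; it cannot forge
  signatures.\<close>
inductive step :: "('s \<Rightarrow> 'ob \<Rightarrow> 's \<times> 'r) \<Rightarrow> nat \<Rightarrow> ('ob, 's) gstate \<Rightarrow> 'ob event \<Rightarrow> ('ob, 's) gstate \<Rightarrow> bool"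
  for F n where
  invoke: "\<lbrakk> i < n; \<not> chalted (cl gs i); cu (cl gs i) = None; ob \<notin> invoked gs \<rbrakk> \<Longrightarrow>
     step F n gs (Invoke i ob)
       (gs\<lparr> cl := (cl gs)(i := (cl gs i)\<lparr> cu := Some ob \<rparr>),
            sigs := insert (i, InvokeP ob i) (sigs gs),
            invoked := insert ob (invoked gs) \<rparr>)"
| deliv: "\<lbrakk> i < n; \<not> chalted (cl gs i) \<rbrakk> \<Longrightarrow> step F n gs (Deliver i m) (deliver F gs i m)"

inductive reachable :: "('s \<Rightarrow> 'ob \<Rightarrow> 's \<times> 'r) \<Rightarrow> 's \<Rightarrow> nat \<Rightarrow> ('ob, 's) gstate \<Rightarrow> bool"
  for F s0 n where
  init: "reachable F s0 n (init_state s0)"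
| stp: "reachable F s0 n gs \<Longrightarrow> step F n gs e gs' \<Longrightarrow> reachable F s0 n gs'"

definition confirmed :: "nat \<Rightarrow> ('ob, 's) gstate \<Rightarrow> 'ob \<Rightarrow> bool" where
  "confirmed n gs ob \<longleftrightarrow> (\<exists>k<n. ob \<in> fst ` set (confs gs k))"

text \<open>pi|^ob: the prefix of pi ending with (the first occurrence of) ob.\<close>
definition prefix_to :: "'ob \<Rightarrow> 'ob list \<Rightarrow> 'ob list" where
  "prefix_to ob xs = takeWhile (\<lambda>x. x \<noteq> ob) xs @ [ob]"

text \<open>is_pi n gs i pi: pi is pi_i (for some admissible choice of the confirming client C_k).\<close>
definition is_pi :: "nat \<Rightarrow> ('ob, 's) gstate \<Rightarrow> nat \<Rightarrow> 'ob list \<Rightarrow> bool" where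
  "is_pi n gs i pi \<longleftrightarrow>
    (if \<exists>ob l. (ob, l) \<in> set (commits gs i) \<and> confirmed n gs ob then
       (\<exists>ob l k. (ob, l) \<in> set (commits gs i) \<and> k < n \<and> ob \<in> fst ` set (confs gs k)
          \<and> (\<forall>ob' l'. (ob', l') \<in> set (commits gs i) \<and> confirmed n gs ob' \<longrightarrow> l' \<le> l)
          \<and> pi = prefix_to ob (map fst (confs gs k))
                 @ map fst (sort_key snd (filter (\<lambda>x. l < snd x) (commits gs i))))
     else pi = map fst (sort_key snd (commits gs i)))"

end

theory Submission
  imports Defs
begin

definition HCp :: "(nat \<Rightarrow> 'ob hsh option) \<Rightarrow> bool" where
  "HCp H \<longleftrightarrow> H 0 = Some HNull \<and>
     (\<forall>l x. H (Suc l) = Some x \<longrightarrow> (\<exists>y ob j. H l = Some y \<and> x = Hash y ob (Suc l) j))"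

definition extH :: "(nat \<Rightarrow> 'ob hsh option) \<Rightarrow> (nat \<Rightarrow> 'ob hsh option) \<Rightarrow> bool" where
  "extH H H' \<longleftrightarrow> (\<forall>x y. H x = Some y \<longrightarrow> H' x = Some y)"

lemma loop:
  "reply_loop S i Z l w H gam mu = Some (H', g, m) \<Longrightarrow> HCp H \<Longrightarrow> 0 < l \<Longrightarrow> H (l - 1) \<noteq> None
   \<Longrightarrow> extH H H' \<and> HCp H' \<and>
      (\<forall>k<length w. \<exists>p. H' (l+k) = Some (Hash p (fst (w!k)) (l+k) (fst (snd (w!k)))))"
proof (induction w arbitrary: l H gam mu)
  case Nil
  then show ?case by (auto simp: extH_def)
next
  case (Cons a w)
  obtain ob j tau where a: "a = (ob, j, tau)" by (cases a) auto
  define hv where "hv = Hash (the (H (l - 1))) ob l j"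
  define H1 where "H1 = (if H l = None then H(l := Some hv) else H)"
  from Cons.prems(1) have ver: "verify S j tau (InvokeP ob j)" and
    nh: "\<not> (H l \<noteq> None \<and> H l \<noteq> Some hv)"
    by (auto simp: a hv_def Let_def split: if_splits)
  from Cons.prems(1) nh ver obtain gam' mu' where
    rec: "reply_loop S i Z (Suc l) w H1 gam' mu' = Some (H', g, m)"
    by (auto simp: a hv_def H1_def Let_def split: if_splits)
  have H1l: "H1 l = Some hv" using nh by (auto simp: H1_def)
  have e1: "extH H H1" using nh by (auto simp: H1_def extH_def)
  have hc1: "HCp H1"
  proof -
    have "H1 0 = Some HNull" using Cons.prems(2,3) by (auto simp: H1_def HCp_def)
    moreover have "\<forall>l' x. H1 (Suc l') = Some x \<longrightarrow> (\<exists>y ob j. H1 l' = Some y \<and> x = Hash y ob (Suc l') j)"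
    proof (intro allI impI)
      fix l' x assume h: "H1 (Suc l') = Some x"
      show "\<exists>y ob j. H1 l' = Some y \<and> x = Hash y ob (Suc l') j"
      proof (cases "H l = None")
        case False then have "H (Suc l') = Some x" using h by (auto simp add: H1_def)
        then show ?thesis using False Cons.prems(2) unfolding HCp_def H1_def by auto
      next
        case True
        show ?thesis
        proof (cases "Suc l' = l")
          case True
          then show ?thesis using h Cons.prems(3,4) \<open>H l = None\<close>
            by (auto simp: H1_def hv_def)
        next
          case False
          hence hx: "H (Suc l') = Some x" using h True by (auto simp: H1_def)
          then obtain y ob' j' where "H l' = Some y" "x = Hash y ob' (Suc l') j'"
            using Cons.prems(2) unfolding HCp_def by blast
          moreover have "l' \<noteq> l" using \<open>H l = None\<close> \<open>H l' = Some y\<close> by auto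
          ultimately show ?thesis by (auto simp: H1_def)
        qed
      qed
    qed
    ultimately show ?thesis by (simp add: HCp_def)
  qed
  have IH: "extH H1 H' \<and> HCp H' \<and>
      (\<forall>k<length w. \<exists>p. H' (Suc l+k) = Some (Hash p (fst (w!k)) (Suc l+k) (fst (snd (w!k)))))"
    using Cons.IH[OF rec hc1] H1l by auto
  have "extH H H'" using e1 IH by (auto simp: extH_def)
  moreover have "H' l = Some hv" using IH H1l by (auto simp: extH_def)
  ultimately show ?case using IH
    apply (auto simp: a hv_def)
    subgoal for k by (cases k) auto
    done
qed

definition "P1 gs \<longleftrightarrow> (\<forall>k. HCp (cH (cl gs k)))"
definition "P2 gs \<longleftrightarrow> (\<forall>k. cc (cl gs k) = length (confs gs k))"
definition "P3 gs \<longleftrightarrow> (\<forall>k p. p < length (confs gs k) \<longrightarrow> (\<exists>ob j h z. confs gs k ! p = (ob, Suc p, j)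
        \<and> cH (cl gs k) (Suc p) = Some h \<and> h = Hash (the (cH (cl gs k) p)) ob (Suc p) j
        \<and> (j, CommitP ob (Suc p) h z) \<in> sigs gs))"
definition "P4 gs \<longleftrightarrow> (\<forall>j ob q h z. (j, CommitP ob q h z) \<in> sigs gs \<longrightarrow> (ob,q) \<in> set (commits gs j) \<and> cH (cl gs j) q = Some h)"
definition "P5 gs \<longleftrightarrow> (\<forall>j ob l. (ob,l) \<in> set (commits gs j) \<longrightarrow> (\<exists>p. cH (cl gs j) l = Some (Hash p ob l j)))"
definition "P6 gs \<longleftrightarrow> (\<forall>j ob j'. (j, InvokeP ob j') \<in> sigs gs \<longrightarrow> j' = j \<and> ob \<in> invoked gs)"
definition "P7 gs \<longleftrightarrow> (\<forall>i j ob. (i, InvokeP ob i) \<in> sigs gs \<longrightarrow> (j, InvokeP ob j) \<in> sigs gs \<longrightarrow> i = j)"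
definition "P8 gs \<longleftrightarrow> (\<forall>j ob l. (ob,l) \<in> set (commits gs j) \<longrightarrow> (j, InvokeP ob j) \<in> sigs gs)"
definition "P9 gs \<longleftrightarrow> (\<forall>j. distinct (map fst (commits gs j)))"
definition "P10 gs \<longleftrightarrow> (\<forall>j u. cu (cl gs j) = Some u \<longrightarrow> u \<notin> fst ` set (commits gs j) \<and> (j, InvokeP u j) \<in> sigs gs)"

definition "INV gs \<longleftrightarrow> P1 gs \<and> P2 gs \<and> P3 gs \<and> P4 gs \<and> P5 gs \<and> P6 gs \<and> P7 gs \<and> P8 gs \<and> P9 gs \<and> P10 gs"

lemma inv_init: "INV (init_state s0)"
  by (auto simp: INV_def P1_def P2_def P3_def P4_def P5_def P6_def P7_def P8_def P9_def P10_def
     init_state_def init_client_def HCp_def)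

lemma inv_halt: "INV gs \<Longrightarrow> INV (halt gs i)"
  unfolding INV_def P1_def P2_def P3_def P4_def P5_def P6_def P7_def P8_def P9_def P10_def halt_def by simp

lemma inv_invoke:
  assumes I: "INV gs" and fresh: "ob \<notin> invoked gs" and cu: "cu (cl gs i) = None"
  shows "INV (gs\<lparr> cl := (cl gs)(i := (cl gs i)\<lparr> cu := Some ob \<rparr>),
            sigs := insert (i, InvokeP ob i) (sigs gs),
            invoked := insert ob (invoked gs) \<rparr>)" (is "INV ?g")
proof -
  have cH: "\<And>k. cH (cl ?g k) = cH (cl gs k)" by simp
  have cc: "\<And>k. cc (cl ?g k) = cc (cl gs k)" by simp
  have p6: "P6 gs" and p8: "P8 gs" using I by (simp_all add: INV_def)
  have nc: "ob \<notin> fst ` set (commits gs i)" using p6 p8 fresh unfolding P6_def P8_def by force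
  have ns: "\<And>j j'. (j, InvokeP ob j') \<notin> sigs gs" using p6 fresh unfolding P6_def by blast
  have "P1 ?g" using I unfolding INV_def P1_def cH by simp
  moreover have "P2 ?g" using I unfolding INV_def P2_def cc by simp
  moreover have "P3 ?g" using I unfolding INV_def P3_def cH by simp
  moreover have "P4 ?g" using I unfolding INV_def P4_def cH by simp
  moreover have "P5 ?g" using I unfolding INV_def P5_def cH by simp
  moreover have "P6 ?g" using I unfolding INV_def P6_def by auto
  moreover have "P7 ?g" using I ns unfolding INV_def P7_def by auto
  moreover have "P8 ?g" using I unfolding INV_def P8_def by simp
  moreover have "P9 ?g" using I unfolding INV_def P9_def by simp
  moreover have "P10 ?g" using I nc unfolding INV_def P10_def by auto
  ultimately show ?thesis unfolding INV_def by blast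
qed


lemma HCp_prev: "HCp H \<Longrightarrow> H (Suc p) = Some x \<Longrightarrow> \<exists>y. H p = Some y"
  unfolding HCp_def by blast

lemma cc_def_H: assumes "INV gs" shows "cH (cl gs k) (cc (cl gs k)) \<noteq> None"
proof (cases "cc (cl gs k)")
  case 0 then show ?thesis using assms by (simp add: INV_def P1_def HCp_def)
next
  case (Suc p)
  then have "p < length (confs gs k)" using assms by (simp add: INV_def P2_def)
  then show ?thesis using assms Suc unfolding INV_def P3_def by force
qed

lemma inv_reply_succ:
  assumes I: "INV gs"
    and lp: "reply_loop (sigs gs) i (cZ (cl gs i)) (Suc (cc (cl gs i))) w (cH (cl gs i)) [] [] = Some (H, gam, mu)"
    and wne: "w \<noteq> []" and cu: "cu (cl gs i) = Some (fst (last w))" and li: "fst (snd (last w)) = i"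
    and ldef: "l = cc (cl gs i) + length w" and udef: "u = fst (last w)"
  shows "INV (gs\<lparr> cl := (cl gs)(i := (cl gs i)\<lparr> cH := H, cZ := Z', cu := None \<rparr>),
                      sigs := insert (i, CommitP u l (the (H l)) z) (sigs gs),
                      commits := (commits gs)(i := commits gs i @ [(u, l)]) \<rparr>)" (is "INV ?g")
proof -
  let ?st = "cl gs i"
  have p1: "P1 gs" and p2: "P2 gs" and p3: "P3 gs" and p4: "P4 gs" and p5: "P5 gs" and p6: "P6 gs"
    and p7: "P7 gs" and p8: "P8 gs" and p9: "P9 gs" and p10: "P10 gs" using I by (simp_all add: INV_def)
  have hc0: "HCp (cH ?st)" using p1 by (simp add: P1_def)
  have "cH ?st (Suc (cc ?st) - 1) \<noteq> None" using cc_def_H[OF I] by simp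
  from loop[OF lp hc0 _ this] have ex: "extH (cH ?st) H" and hc: "HCp H"
    and lst: "\<forall>k<length w. \<exists>p. H (Suc (cc ?st) + k) = Some (Hash p (fst (w!k)) (Suc (cc ?st) + k) (fst (snd (w!k))))"
    by auto
  have lt: "length w - 1 < length w" using wne by simp
  have eq: "Suc (cc ?st) + (length w - 1) = l" using wne ldef by (cases w) auto
  have lw: "last w = w ! (length w - 1)" using wne by (simp add: last_conv_nth)
  from lst[rule_format, OF lt] obtain p where
    "H (Suc (cc ?st) + (length w - 1)) = Some (Hash p (fst (w ! (length w - 1))) (Suc (cc ?st) + (length w - 1)) (fst (snd (w ! (length w - 1)))))"
    by blast
  then have "H l = Some (Hash p u l i)" unfolding eq using li udef lw by simp
  then have Hl: "H l = Some (Hash p u l i)" .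
  have cHg: "\<And>k. cH (cl ?g k) = (if k = i then H else cH (cl gs k))" by simp
  have exg: "\<And>k x y. cH (cl gs k) x = Some y \<Longrightarrow> cH (cl ?g k) x = Some y"
    using ex by (auto simp: extH_def)
  have un: "u \<notin> fst ` set (commits gs i)" and ui: "(i, InvokeP u i) \<in> sigs gs"
    using p10 cu udef unfolding P10_def by auto
  have "P1 ?g" using p1 hc unfolding P1_def by simp
  moreover have "P2 ?g" using p2 unfolding P2_def by simp
  moreover have "P3 ?g" unfolding P3_def
  proof (intro allI impI)
    fix k q assume "q < length (confs ?g k)"
    then have "q < length (confs gs k)" by simp
    with p3 obtain ob j h z where A: "confs gs k ! q = (ob, Suc q, j)" "cH (cl gs k) (Suc q) = Some h"
      "h = Hash (the (cH (cl gs k) q)) ob (Suc q) j" "(j, CommitP ob (Suc q) h z) \<in> sigs gs"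
      unfolding P3_def by blast
    have "HCp (cH (cl gs k))" using p1 unfolding P1_def by blast
    from HCp_prev[OF this A(2)] obtain y where "cH (cl gs k) q = Some y" by blast
    then show "\<exists>ob j h z. confs ?g k ! q = (ob, Suc q, j)
        \<and> cH (cl ?g k) (Suc q) = Some h \<and> h = Hash (the (cH (cl ?g k) q)) ob (Suc q) j
        \<and> (j, CommitP ob (Suc q) h z) \<in> sigs ?g"
      using A exg[of k q y] exg[OF A(2)] by auto
  qed
  moreover have "P4 ?g" unfolding P4_def
  proof (intro allI impI)
    fix j ob q h z' assume "(j, CommitP ob q h z') \<in> sigs ?g"
    then consider "j = i" "ob = u" "q = l" "h = the (H l)" | "(j, CommitP ob q h z') \<in> sigs gs" by auto
    then show "(ob, q) \<in> set (commits ?g j) \<and> cH (cl ?g j) q = Some h"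
    proof cases
      case 1 then show ?thesis using Hl by simp
    next
      case 2 then show ?thesis using p4 exg unfolding P4_def by fastforce
    qed
  qed
  moreover have "P5 ?g" unfolding P5_def
  proof (intro allI impI)
    fix j ob l' assume "(ob, l') \<in> set (commits ?g j)"
    then consider "j = i" "ob = u" "l' = l" | "(ob, l') \<in> set (commits gs j)" by (auto split: if_splits)
    then show "\<exists>p. cH (cl ?g j) l' = Some (Hash p ob l' j)"
    proof cases
      case 1 then show ?thesis using Hl by simp
    next
      case 2 then show ?thesis using p5 exg unfolding P5_def by blast
    qed
  qed
  moreover have "P6 ?g" using p6 unfolding P6_def by simp
  moreover have "P7 ?g" using p7 unfolding P7_def by simp
  moreover have "P8 ?g" using p8 ui unfolding P8_def by (auto split: if_splits)
  moreover have "P9 ?g" using p9 un unfolding P9_def by auto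
  moreover have "P10 ?g" using p10 unfolding P10_def by auto
  ultimately show ?thesis unfolding INV_def by blast
qed


lemma HCp_upd:
  assumes "HCp H" "H (Suc c) = None" "H c = Some y"
  shows "HCp (H(Suc c := Some (Hash y ob (Suc c) j)))"
  unfolding HCp_def
proof (intro conjI allI impI)
  show "(H(Suc c \<mapsto> Hash y ob (Suc c) j)) 0 = Some HNull" using assms(1) by (simp add: HCp_def)
  fix l x assume h: "(H(Suc c \<mapsto> Hash y ob (Suc c) j)) (Suc l) = Some x"
  show "\<exists>y' ob' j'. (H(Suc c \<mapsto> Hash y ob (Suc c) j)) l = Some y' \<and> x = Hash y' ob' (Suc l) j'"
  proof (cases "l = c")
    case True then show ?thesis using h assms by auto
  next
    case False
    then have hx: "H (Suc l) = Some x" using h by auto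
    then obtain y' ob' j' where "H l = Some y'" "x = Hash y' ob' (Suc l) j'"
      using assms(1) unfolding HCp_def by blast
    moreover have "l \<noteq> Suc c" using \<open>H l = Some y'\<close> assms(2) by auto
    ultimately show ?thesis by auto
  qed
qed

lemma inv_bcast_succ:
  assumes I: "INV gs"
    and qd: "q = Suc (cc (cl gs i))" and sg: "(j, CommitP ob q h z) \<in> sigs gs"
    and Hd: "H = (if cH (cl gs i) q = None then (cH (cl gs i))(q := Some (Hash (the (cH (cl gs i) (q - 1))) ob q j))
                    else cH (cl gs i))"
    and Hq: "H q = Some h"
  shows "INV (gs\<lparr> cl := (cl gs)(i := (cl gs i)\<lparr> cH := H, cs := s', cc := Suc (cc (cl gs i)) \<rparr>),
                confs := (confs gs)(i := confs gs i @ [(ob, q, j)]) \<rparr>)" (is "INV ?g")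
proof -
  let ?st = "cl gs i"
  let ?c = "cc ?st"
  have p1: "P1 gs" and p2: "P2 gs" and p3: "P3 gs" and p4: "P4 gs" and p5: "P5 gs" and p6: "P6 gs"
    and p7: "P7 gs" and p8: "P8 gs" and p9: "P9 gs" and p10: "P10 gs" using I by (simp_all add: INV_def)
  have hc0: "HCp (cH ?st)" using p1 by (simp add: P1_def)
  obtain y where y: "cH ?st ?c = Some y" using cc_def_H[OF I, of i] by blast
  have hc: "HCp H" and ex: "extH (cH ?st) H" and Hc: "H ?c = Some y" and hh: "h = Hash y ob q j"
  proof -
    show "HCp H"
    proof (cases "cH ?st q = None")
      case True then show ?thesis using HCp_upd[OF hc0 _ y] Hd qd y by simp
    next
      case False then have "H = cH ?st" using Hd by (simp only: if_False)
      then show ?thesis using hc0 by simp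
    qed
    show "extH (cH ?st) H" using Hd by (auto simp: extH_def)
    show "H ?c = Some y" using Hd y qd by auto
    show "h = Hash y ob q j"
    proof (cases "cH ?st q = None")
      case True then show ?thesis using Hd Hq y qd by simp
    next
      case False
      then have "cH ?st q = Some h" using Hd Hq by auto
      then obtain y' o' j' where "cH ?st ?c = Some y'" "h = Hash y' o' q j'"
        using hc0 qd unfolding HCp_def by blast
      moreover from p4 sg have "(ob, q) \<in> set (commits gs j)" "cH (cl gs j) q = Some h"
        unfolding P4_def by blast+
      moreover from p5 this(1) obtain pp where "cH (cl gs j) q = Some (Hash pp ob q j)"
        unfolding P5_def by blast
      ultimately show ?thesis using y by auto
    qed
  qed
  have exg: "\<And>k x y. cH (cl gs k) x = Some y \<Longrightarrow> cH (cl ?g k) x = Some y"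
    using ex by (auto simp: extH_def)
  have "P1 ?g" using p1 hc unfolding P1_def by simp
  moreover have "P2 ?g" using p2 unfolding P2_def by simp
  moreover have "P3 ?g" unfolding P3_def
  proof (intro allI impI)
    fix k p assume pl: "p < length (confs ?g k)"
    show "\<exists>ob j h z. confs ?g k ! p = (ob, Suc p, j)
        \<and> cH (cl ?g k) (Suc p) = Some h \<and> h = Hash (the (cH (cl ?g k) p)) ob (Suc p) j
        \<and> (j, CommitP ob (Suc p) h z) \<in> sigs ?g"
    proof (cases "k = i \<and> p = length (confs gs i)")
      case True
      then have "p = ?c" using p2 unfolding P2_def by simp
      moreover have "(confs gs i @ [(ob, q, j)]) ! p = (ob, q, j)" using True by simp
      ultimately show ?thesis using True sg Hq Hc hh qd by auto
    next
      case False
      then have "p < length (confs gs k)" using pl by (auto split: if_splits)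
      moreover have "confs ?g k ! p = confs gs k ! p" using False pl calculation by (auto simp: nth_append)
      moreover from p3 calculation(1) obtain ob j h z where A: "confs gs k ! p = (ob, Suc p, j)" "cH (cl gs k) (Suc p) = Some h"
        "h = Hash (the (cH (cl gs k) p)) ob (Suc p) j" "(j, CommitP ob (Suc p) h z) \<in> sigs gs"
        unfolding P3_def by blast
      moreover have "HCp (cH (cl gs k))" using p1 unfolding P1_def by blast
      moreover from HCp_prev[OF this A(2)] obtain y where "cH (cl gs k) p = Some y" by blast
      ultimately show ?thesis using exg[of k p y] exg[OF A(2)] by auto
    qed
  qed
  moreover have "P4 ?g" using p4 exg unfolding P4_def by fastforce
  moreover have "P5 ?g" unfolding P5_def
  proof (intro allI impI)
    fix j' ob' l' assume "(ob', l') \<in> set (commits ?g j')"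
    then have "(ob', l') \<in> set (commits gs j')" by simp
    then obtain pp where "cH (cl gs j') l' = Some (Hash pp ob' l' j')" using p5 unfolding P5_def by blast
    then show "\<exists>pp. cH (cl ?g j') l' = Some (Hash pp ob' l' j')" using exg by blast
  qed
  moreover have "P6 ?g" using p6 unfolding P6_def by simp
  moreover have "P7 ?g" using p7 unfolding P7_def by simp
  moreover have "P8 ?g" using p8 unfolding P8_def by simp
  moreover have "P9 ?g" using p9 unfolding P9_def by simp
  moreover have "P10 ?g" using p10 unfolding P10_def by simp
  ultimately show ?thesis unfolding INV_def by blast
qed


lemma inv_reply: assumes I: "INV gs" shows "INV (handle_reply F gs i w)"
proof (cases "reply_loop (sigs gs) i (cZ (cl gs i)) (Suc (cc (cl gs i))) w (cH (cl gs i)) [] []")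
  case None then show ?thesis using I inv_halt by (simp add: handle_reply_def)
next
  case (Some r)
  obtain H gam mu where r: "r = (H, gam, mu)" by (cases r) auto
  show ?thesis
  proof (cases "w = [] \<or> Some (fst (last w)) \<noteq> cu (cl gs i) \<or> fst (snd (last w)) \<noteq> i")
    case True then show ?thesis using I inv_halt Some r by (simp add: handle_reply_def)
  next
    case False
    have lp: "reply_loop (sigs gs) i (cZ (cl gs i)) (Suc (cc (cl gs i))) w (cH (cl gs i)) [] [] = Some (H, gam, mu)"
      using Some r by simp
    have cu: "cu (cl gs i) = Some (fst (last w))" using False by simp
    have wne: "w \<noteq> []" and li: "fst (snd (last w)) = i" using False by auto
    show ?thesis using Some r wne li
      inv_reply_succ[OF I lp wne cu li refl refl]
      by (simp add: handle_reply_def Let_def cu)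
  qed
qed

lemma inv_bcast: assumes I: "INV gs" shows "INV (handle_broadcast F gs i ob q h z phi j)"
proof (cases "q \<noteq> Suc (cc (cl gs i)) \<or> \<not> verify (sigs gs) j phi (CommitP ob q h z)")
  case True then show ?thesis using I inv_halt by (simp add: handle_broadcast_def)
next
  case False
  define H where "H = (if cH (cl gs i) q = None then (cH (cl gs i))(q := Some (Hash (the (cH (cl gs i) (q - 1))) ob q j))
                    else cH (cl gs i))"
  have eq: "handle_broadcast F gs i ob q h z phi j = (if H q \<noteq> Some h then halt gs i
       else gs\<lparr> cl := (cl gs)(i := (cl gs i)\<lparr> cH := H,
                                   cs := (if z = Success then fst (F (cs (cl gs i)) ob) else cs (cl gs i)),
                                   cc := Suc (cc (cl gs i)) \<rparr>),
                confs := (confs gs)(i := confs gs i @ [(ob, q, j)]) \<rparr>)"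
    unfolding handle_broadcast_def Let_def H_def using False by (simp only: if_False)
  have sg: "(j, CommitP ob q h z) \<in> sigs gs" using False by (simp add: verify_def)
  have qd: "q = Suc (cc (cl gs i))" using False by simp
  show ?thesis
  proof (cases "H q = Some h")
    case False2: False
    then show ?thesis using I inv_halt eq by simp
  next
    case True
    show ?thesis unfolding eq using True inv_bcast_succ[OF I qd sg H_def True] by simp
  qed
qed

lemma inv_step: assumes "INV gs" "step F n gs e gs'" shows "INV gs'"
  using assms(2)
proof cases
  case (invoke i ob) then show ?thesis using inv_invoke[OF assms(1)] by simp
next
  case (deliv i m) show ?thesis
  proof (cases m)
    case (Reply w) then show ?thesis using deliv inv_reply[OF assms(1)] by (simp add: deliver_def)
  next
    case (Broadcast ob q h z phi j) then show ?thesis using deliv inv_bcast[OF assms(1)] by (simp add: deliver_def)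
  qed
qed

lemma inv_reach: "reachable F s0 n gs \<Longrightarrow> INV gs"
proof (induction rule: reachable.induct)
  case init then show ?case by (rule inv_init)
next
  case (stp gs e gs') then show ?case using inv_step by blast
qed


fun chain_ops :: "'ob hsh \<Rightarrow> 'ob list" where
  "chain_ops HNull = []"
| "chain_ops (Hash p ob l j) = chain_ops p @ [ob]"

lemma chain_confs:
  assumes I: "INV gs" shows "p \<le> length (confs gs k) \<Longrightarrow>
    chain_ops (the (cH (cl gs k) p)) = map fst (take p (confs gs k))"
proof (induction p)
  case 0 then show ?case using I by (simp add: INV_def P1_def HCp_def)
next
  case (Suc p)
  then have pl: "p < length (confs gs k)" by simp
  with I obtain ob j h z where A: "confs gs k ! p = (ob, Suc p, j)" "cH (cl gs k) (Suc p) = Some h"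
      "h = Hash (the (cH (cl gs k) p)) ob (Suc p) j"
    unfolding INV_def P3_def by blast
  then show ?case using Suc pl by (simp add: take_Suc_conv_app_nth)
qed

lemma distinct_fst_eq: "distinct (map fst xs) \<Longrightarrow> (a, b) \<in> set xs \<Longrightarrow> (a, c) \<in> set xs \<Longrightarrow> b = c"
  by (induction xs) (auto simp: image_iff)

lemma commit_unique:
  assumes I: "INV gs" and "(ob, l) \<in> set (commits gs c)" "(ob, l') \<in> set (commits gs c')"
  shows "c = c' \<and> l = l'"
proof -
  have "(c, InvokeP ob c) \<in> sigs gs" "(c', InvokeP ob c') \<in> sigs gs"
    using I assms(2,3) unfolding INV_def P8_def by blast+
  then have cc: "c = c'" using I unfolding INV_def P7_def by blast
  moreover have "distinct (map fst (commits gs c))" using I unfolding INV_def P9_def by blast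
  ultimately show ?thesis using distinct_fst_eq assms(2,3) by metis
qed

lemma prefix_take: "ob \<in> set xs \<Longrightarrow> prefix_to ob xs = take (Suc (length (takeWhile (\<lambda>x. x \<noteq> ob) xs))) xs"
  by (induction xs) (auto simp: prefix_to_def)

lemma prefix_append: "ob \<in> set xs \<Longrightarrow> prefix_to ob (xs @ ys) = prefix_to ob xs"
  by (simp add: prefix_to_def takeWhile_append1[where x = ob])

lemma prefix_prefix: "a \<in> set xs \<Longrightarrow> ob \<in> set (prefix_to a xs) \<Longrightarrow> prefix_to ob (prefix_to a xs) = prefix_to ob xs"
  by (induction xs) (auto simp: prefix_to_def)

lemma prefix_set: "a \<in> set xs \<Longrightarrow> set (prefix_to a xs) \<subseteq> set xs"
  by (induction xs) (auto simp: prefix_to_def)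

lemma tw_len: "ob \<in> set xs \<Longrightarrow> length (takeWhile (\<lambda>x. x \<noteq> ob) xs) < length xs"
  by (induction xs) auto

lemma tw_nth: "ob \<in> set xs \<Longrightarrow> xs ! length (takeWhile (\<lambda>x. x \<noteq> ob) xs) = ob"
  by (induction xs) auto

lemma lemA:
  assumes I: "INV gs" and ob: "ob \<in> fst ` set (confs gs k)"
  shows "\<exists>c l. (ob, l) \<in> set (commits gs c) \<and> prefix_to ob (map fst (confs gs k)) = chain_ops (the (cH (cl gs c) l))"
proof -
  let ?xs = "map fst (confs gs k)"
  define p where "p = length (takeWhile (\<lambda>x. x \<noteq> ob) ?xs)"
  have obs: "ob \<in> set ?xs" using ob by simp
  have pl: "p < length (confs gs k)" unfolding p_def using obs
    using tw_len[OF obs] by simp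
  have nth: "?xs ! p = ob" unfolding p_def using tw_nth[OF obs] .
  from I pl obtain ob' j h z where A: "confs gs k ! p = (ob', Suc p, j)" "cH (cl gs k) (Suc p) = Some h"
      "(j, CommitP ob' (Suc p) h z) \<in> sigs gs"
    unfolding INV_def P3_def by blast
  have "ob' = ob" using nth A(1) pl by simp
  from I A(3) have B: "(ob, Suc p) \<in> set (commits gs j)" "cH (cl gs j) (Suc p) = Some h"
    unfolding INV_def P4_def \<open>ob' = ob\<close> by blast+
  have "prefix_to ob ?xs = map fst (take (Suc p) (confs gs k))"
    using prefix_take[OF obs] p_def by (simp add: take_map)
  also have "\<dots> = chain_ops (the (cH (cl gs k) (Suc p)))" using chain_confs[OF I, of "Suc p" k] pl by simp
  also have "\<dots> = chain_ops (the (cH (cl gs j) (Suc p)))" using A(2) B(2) by simp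
  finally show ?thesis using B(1) by blast
qed

lemma lemA':
  assumes I: "INV gs" and ob: "ob \<in> fst ` set (confs gs k)" and c: "(ob, l) \<in> set (commits gs c)"
  shows "prefix_to ob (map fst (confs gs k)) = chain_ops (the (cH (cl gs c) l))"
  using lemA[OF I ob] commit_unique[OF I c] by blast


lemma beta_mem: "ob \<in> set (map fst (sort_key snd (filter (\<lambda>x. l < snd x) xs))) \<Longrightarrow> \<exists>l'. (ob, l') \<in> set xs \<and> l < l'"
  by auto

lemma all_mem: "ob \<in> set (map fst (sort_key snd xs)) \<Longrightarrow> \<exists>l'. (ob, l') \<in> set xs"
  by auto

lemma piconf:
  assumes I: "INV gs" and pi: "is_pi n gs i pii" and obp: "ob \<in> set pii" and cf: "confirmed n gs ob"
    and c: "(ob, l0) \<in> set (commits gs c)"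
  shows "prefix_to ob pii = chain_ops (the (cH (cl gs c) l0))"
proof (cases "\<exists>ob l. (ob, l) \<in> set (commits gs i) \<and> confirmed n gs ob")
  case True
  with pi obtain ob1 l1 k1 where A: "(ob1, l1) \<in> set (commits gs i)" "k1 < n" "ob1 \<in> fst ` set (confs gs k1)"
    "\<forall>ob' l'. (ob', l') \<in> set (commits gs i) \<and> confirmed n gs ob' \<longrightarrow> l' \<le> l1"
    "pii = prefix_to ob1 (map fst (confs gs k1))
                 @ map fst (sort_key snd (filter (\<lambda>x. l1 < snd x) (commits gs i)))"
    unfolding is_pi_def by auto
  let ?xs = "map fst (confs gs k1)"
  have o1: "ob1 \<in> set ?xs" using A(3) by simp
  have "ob \<notin> set (map fst (sort_key snd (filter (\<lambda>x. l1 < snd x) (commits gs i))))"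
  proof
    assume "ob \<in> set (map fst (sort_key snd (filter (\<lambda>x. l1 < snd x) (commits gs i))))"
    then obtain l' where "(ob, l') \<in> set (commits gs i)" "l1 < l'" by (blast dest: beta_mem)
    with A(4) cf show False by force
  qed
  then have oa: "ob \<in> set (prefix_to ob1 ?xs)" using obp A(5) by auto
  have "prefix_to ob pii = prefix_to ob (prefix_to ob1 ?xs)" using A(5) prefix_append[OF oa] by simp
  also have "\<dots> = prefix_to ob ?xs" using prefix_prefix[OF o1 oa] .
  also have "\<dots> = chain_ops (the (cH (cl gs c) l0))"
    using lemA'[OF I _ c] prefix_set[OF o1] oa by force
  finally show ?thesis .
next
  case False
  then have "pii = map fst (sort_key snd (commits gs i))" using pi unfolding is_pi_def by auto
  then obtain l' where "(ob, l') \<in> set (commits gs i)" using obp by (blast dest: all_mem)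
  then show ?thesis using False cf by blast
qed

lemma piunconf:
  assumes pi: "is_pi n gs i pii" and obp: "ob \<in> set pii" and cf: "\<not> confirmed n gs ob"
  shows "\<exists>l. (ob, l) \<in> set (commits gs i)"
proof (cases "\<exists>ob l. (ob, l) \<in> set (commits gs i) \<and> confirmed n gs ob")
  case True
  with pi obtain ob1 l1 k1 where A: "k1 < n" "ob1 \<in> fst ` set (confs gs k1)"
    "pii = prefix_to ob1 (map fst (confs gs k1))
                 @ map fst (sort_key snd (filter (\<lambda>x. l1 < snd x) (commits gs i)))"
    unfolding is_pi_def by auto
  have o1: "ob1 \<in> set (map fst (confs gs k1))" using A(2) by simp
  have "ob \<notin> set (prefix_to ob1 (map fst (confs gs k1)))"
  proof
    assume "ob \<in> set (prefix_to ob1 (map fst (confs gs k1)))"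
    then have "ob \<in> fst ` set (confs gs k1)" using prefix_set[OF o1] by auto
    then show False using cf A(1) unfolding confirmed_def by blast
  qed
  then show ?thesis using obp A(3) by (auto dest: beta_mem)
next
  case False
  then have "pii = map fst (sort_key snd (commits gs i))" using pi unfolding is_pi_def by auto
  then show ?thesis using obp by (blast dest: all_mem)
qed

lemma pisame:
  assumes I: "INV gs" and p1: "is_pi n gs i pa" and p2: "is_pi n gs i pb"
  shows "pa = pb"
proof (cases "\<exists>ob l. (ob, l) \<in> set (commits gs i) \<and> confirmed n gs ob")
  case True
  with p1 obtain ob1 l1 k1 where A: "(ob1, l1) \<in> set (commits gs i)" "k1 < n" "ob1 \<in> fst ` set (confs gs k1)"
    "\<forall>ob' l'. (ob', l') \<in> set (commits gs i) \<and> confirmed n gs ob' \<longrightarrow> l' \<le> l1"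
    "pa = prefix_to ob1 (map fst (confs gs k1))
                 @ map fst (sort_key snd (filter (\<lambda>x. l1 < snd x) (commits gs i)))"
    unfolding is_pi_def by auto
  from True p2 obtain ob2 l2 k2 where B: "(ob2, l2) \<in> set (commits gs i)" "k2 < n" "ob2 \<in> fst ` set (confs gs k2)"
    "\<forall>ob' l'. (ob', l') \<in> set (commits gs i) \<and> confirmed n gs ob' \<longrightarrow> l' \<le> l2"
    "pb = prefix_to ob2 (map fst (confs gs k2))
                 @ map fst (sort_key snd (filter (\<lambda>x. l2 < snd x) (commits gs i)))"
    unfolding is_pi_def by auto
  have c1: "confirmed n gs ob1" using A(2,3) unfolding confirmed_def by blast
  have c2: "confirmed n gs ob2" using B(2,3) unfolding confirmed_def by blast
  have "l1 \<le> l2" using B(4) A(1) c1 by blast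
  moreover have "l2 \<le> l1" using A(4) B(1) c2 by blast
  ultimately have ll: "l1 = l2" by simp
  obtain q1 where "cH (cl gs i) l1 = Some (Hash q1 ob1 l1 i)" using I A(1) unfolding INV_def P5_def by blast
  moreover obtain q2 where "cH (cl gs i) l2 = Some (Hash q2 ob2 l2 i)" using I B(1) unfolding INV_def P5_def by blast
  ultimately have oo: "ob1 = ob2" using ll by simp
  have "prefix_to ob1 (map fst (confs gs k1)) = chain_ops (the (cH (cl gs i) l1))" using lemA'[OF I A(3) A(1)] .
  moreover have "prefix_to ob2 (map fst (confs gs k2)) = chain_ops (the (cH (cl gs i) l2))" using lemA'[OF I B(3) B(1)] .
  ultimately show ?thesis using A(5) B(5) ll oo by simp
next
  case False
  then show ?thesis using p1 p2 unfolding is_pi_def by auto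
qed

theorem lemma6:
  fixes F :: "'s \<Rightarrow> 'ob \<Rightarrow> 's \<times> 'r" and s0 :: 's and n :: nat
    and gs :: "('ob, 's) gstate" and i j :: nat and pii pij :: "'ob list" and ob :: 'ob
  assumes "reachable F s0 n gs"
    and "i < n" and "j < n"
    and "is_pi n gs i pii" and "is_pi n gs j pij"
    and "ob \<in> set pii" and "ob \<in> set pij"
  shows "prefix_to ob pii = prefix_to ob pij"
proof -
  have I: "INV gs" using inv_reach[OF assms(1)] .
  show ?thesis
  proof (cases "confirmed n gs ob")
    case True
    then obtain k where "ob \<in> fst ` set (confs gs k)" unfolding confirmed_def by blast
    from lemA[OF I this] obtain c l where c: "(ob, l) \<in> set (commits gs c)" by blast
    show ?thesis using piconf[OF I assms(4) assms(6) True c] piconf[OF I assms(5) assms(7) True c] by simp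
  next
    case False
    obtain l where "(ob, l) \<in> set (commits gs i)" using piunconf[OF assms(4) assms(6) False] by blast
    moreover obtain l' where "(ob, l') \<in> set (commits gs j)" using piunconf[OF assms(5) assms(7) False] by blast
    ultimately have "i = j" using commit_unique[OF I] by blast
    then show ?thesis using pisame[OF I assms(4)] assms(5) by simp
  qed
qed

end
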